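(* Let $G$ be a finite simple connected graph on $n$ vertices and $w:E(G)\to\mathbb{R}_{>0}$ a positive edge-weighting. For each edge $e$ define $C_w(e)$ as the maximum of $w(C)=\sum_{f\in E(C)}w(f)$ over all cycles $C\subseteq G$ containing $e$ if $e$ lies on a cycle, and $C_w(e)=2w(e)$ if $e$ is a bridge. Let $F=\{e\in E(G): C_w(e)<2w(e)\}$. Then the edge set $F$ contains no cycle; in particular $|F|\le n-1$.
   Context: A bridge is an edge lying on no cycle. *)

theory Defs
  imports Complex_Main
begin

definition simple_graph :: "'a set \<Rightarrow> 'a set set \<Rightarrow> bool" where
  "simple_graph V E \<longleftrightarrow> finite V \<and> (\<forall>e\<in>E. \<exists>u v. e = {u, v} \<and> u \<in> V \<and> v \<in> V \<and> u \<noteq> v)"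

definition adj :: "'a set set \<Rightarrow> 'a \<Rightarrow> 'a \<Rightarrow> bool" where
  "adj E u v \<longleftrightarrow> {u, v} \<in> E"

definition connected_graph :: "'a set \<Rightarrow> 'a set set \<Rightarrow> bool" where
  "connected_graph V E \<longleftrightarrow> (\<forall>u\<in>V. \<forall>v\<in>V. (u, v) \<in> {(x, y). adj E x y}\<^sup>*)"

definition cycle_edges :: "'a list \<Rightarrow> 'a set set" where
  "cycle_edges xs = {{xs ! i, xs ! ((i + 1) mod length xs)} | i. i < length xs}"

definition is_cycle :: "'a set set \<Rightarrow> 'a list \<Rightarrow> bool" where
  "is_cycle E xs \<longleftrightarrow> length xs \<ge> 3 \<and> distinct xs \<and> cycle_edges xs \<subseteq> E"

definition Cw :: "'a set set \<Rightarrow> ('a set \<Rightarrow> real) \<Rightarrow> 'a set \<Rightarrow> real" where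
  "Cw E w e = (if \<exists>xs. is_cycle E xs \<and> e \<in> cycle_edges xs
     then Max {sum w (cycle_edges xs) | xs. is_cycle E xs \<and> e \<in> cycle_edges xs}
     else 2 * w e)"

end

theory Submission
  imports Defs
begin

definition edges_on :: "'a set \<Rightarrow> 'a set set \<Rightarrow> bool" where
  "edges_on V F \<longleftrightarrow> (\<forall>e\<in>F. \<exists>u v. e = {u, v} \<and> u \<in> V \<and> v \<in> V \<and> u \<noteq> v)"

definition gpath :: "'a set set \<Rightarrow> 'a list \<Rightarrow> bool" where
  "gpath F p \<longleftrightarrow> distinct p \<and> (\<forall>i. Suc i < length p \<longrightarrow> {p ! i, p ! Suc i} \<in> F)"

lemma is_cycle_mono: "is_cycle F xs \<Longrightarrow> F \<subseteq> G \<Longrightarrow> is_cycle G xs"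
  unfolding is_cycle_def by auto

lemma cycle_close:
  assumes "gpath F p" "j < length p" "j \<ge> 2" "{p ! j, p ! 0} \<in> F"
  shows "is_cycle F (take (Suc j) p)"
proof -
  let ?q = "take (Suc j) p"
  have len: "length ?q = Suc j" using assms by simp
  have "cycle_edges ?q \<subseteq> F"
  proof
    fix e assume "e \<in> cycle_edges ?q"
    then obtain i where i: "i < Suc j" "e = {?q ! i, ?q ! ((i + 1) mod length ?q)}"
      unfolding cycle_edges_def by auto
    show "e \<in> F"
    proof (cases "i < j")
      case True
      then have "(i + 1) mod length ?q = Suc i" using len by simp
      then have "e = {p ! i, p ! Suc i}" using i True by simp
      then show ?thesis using assms(1,2) True unfolding gpath_def by auto
    next
      case False
      then have "i = j" using i by simp
      then have "e = {p ! j, p ! 0}" using i len by simp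
      then show ?thesis using assms(4) by simp
    qed
  qed
  moreover have "distinct ?q" using assms(1) unfolding gpath_def by simp
  ultimately show ?thesis unfolding is_cycle_def using len assms(3) by simp
qed

lemma leaf_exists:
  assumes fin: "finite V" and eo: "edges_on V F" and ne: "F \<noteq> {}"
    and ac: "\<nexists>xs. is_cycle F xs"
  shows "\<exists>x y. {x, y} \<in> F \<and> x \<noteq> y \<and> (\<forall>e\<in>F. x \<in> e \<longrightarrow> e = {x, y})"
proof -
  define S where "S = {p. gpath F p \<and> set p \<subseteq> V \<and> length p \<ge> 2}"
  have "S \<subseteq> {p. set p \<subseteq> V \<and> length p \<le> card V}"
  proof
    fix p assume "p \<in> S"
    then have dp: "distinct p" and sp: "set p \<subseteq> V" by (auto simp: S_def gpath_def)
    have "length p = card (set p)" using dp by (simp add: distinct_card)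
    also have "\<dots> \<le> card V" by (rule card_mono[OF fin sp])
    finally show "p \<in> {p. set p \<subseteq> V \<and> length p \<le> card V}" using sp by simp
  qed
  then have finS: "finite S" by (rule finite_subset) (rule finite_lists_length_le[OF fin])
  obtain e0 where "e0 \<in> F" using ne by auto
  moreover have "\<exists>u v. e0 = {u, v} \<and> u \<in> V \<and> v \<in> V \<and> u \<noteq> v"
    using eo \<open>e0 \<in> F\<close> unfolding edges_on_def by simp
  ultimately obtain u v where uv: "{u, v} \<in> F" "u \<in> V" "v \<in> V" "u \<noteq> v"
    by blast
  have "[u, v] \<in> S" unfolding S_def gpath_def using uv by auto
  then have neS: "S \<noteq> {}" by auto
  define m where "m = Max (length ` S)"
  have "m \<in> length ` S" unfolding m_def using finS neS by simp
  then obtain p where p: "p \<in> S" "length p = m" by auto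
  have maxp: "\<And>q. q \<in> S \<Longrightarrow> length q \<le> m" unfolding m_def using finS by simp
  have gp: "gpath F p" and pV: "set p \<subseteq> V" and pl: "length p \<ge> 2" using p unfolding S_def by auto
  define x where "x = p ! 0"
  define y where "y = p ! 1"
  have "Suc 0 < length p" using pl by simp
  then have xy: "{x, y} \<in> F" using gp unfolding gpath_def x_def y_def by simp
  have dp: "distinct p" using gp unfolding gpath_def by simp
  have l0: "0 < length p" and l1: "1 < length p" using pl by linarith+
  have xny: "x \<noteq> y" using nth_eq_iff_index_eq[OF dp l0 l1] unfolding x_def y_def by simp
  have "\<forall>e\<in>F. x \<in> e \<longrightarrow> e = {x, y}"
  proof (intro ballI impI)
    fix e assume eF: "e \<in> F" and xe: "x \<in> e"
    then obtain a b where ab: "e = {a, b}" "a \<in> V" "b \<in> V" "a \<noteq> b"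
      using eo unfolding edges_on_def by blast
    obtain z where z: "e = {x, z}" "z \<in> V" "z \<noteq> x" using ab xe by auto
    show "e = {x, y}"
    proof (cases "z \<in> set p")
      case False
      have "z # p \<in> S"
        unfolding S_def gpath_def
      proof (intro CollectI conjI allI impI)
        show "distinct (z # p)" using False gp unfolding gpath_def by simp
        show "set (z # p) \<subseteq> V" using pV z by simp
        show "2 \<le> length (z # p)" using pl by simp
        fix i assume "Suc i < length (z # p)"
        show "{(z # p) ! i, (z # p) ! Suc i} \<in> F"
        proof (cases i)
          case 0
          then show ?thesis using eF z pl by (simp add: x_def insert_commute)
        next
          case (Suc k)
          then show ?thesis using gp \<open>Suc i < length (z # p)\<close> unfolding gpath_def by simp
        qed
      qed
      then have "length (z # p) \<le> m" by (rule maxp)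
      then show ?thesis using p by simp
    next
      case True
      then obtain j where j: "j < length p" "p ! j = z" by (auto simp: in_set_conv_nth)
      have "j \<noteq> 0" proof assume "j = 0" then show False using j z x_def by simp qed
      show ?thesis
      proof (cases "j = 1")
        case True then show ?thesis using j z y_def by simp
      next
        case False
        then have "j \<ge> 2" using \<open>j \<noteq> 0\<close> by simp
        have "{p ! j, p ! 0} \<in> F" using eF z j x_def by (simp add: insert_commute)
        then have "is_cycle F (take (Suc j) p)"
          using cycle_close[OF gp j(1) \<open>j \<ge> 2\<close>] by simp
        then show ?thesis using ac by blast
      qed
    qed
  qed
  then show ?thesis using xy xny by blast
qed

lemma forest_card:
  "finite V \<Longrightarrow> edges_on V F \<Longrightarrow> \<nexists>xs. is_cycle F xs \<Longrightarrow> card F \<le> card V - 1"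
proof (induction "card V" arbitrary: V F rule: less_induct)
  case less
  show ?case
  proof (cases "F = {}")
    case True then show ?thesis by simp
  next
    case False
    obtain x y where xy: "{x, y} \<in> F" "x \<noteq> y" "\<forall>e\<in>F. x \<in> e \<longrightarrow> e = {x, y}"
      using leaf_exists[OF less.prems(1,2) False less.prems(3)] by blast
    obtain u v where uv: "{x, y} = {u, v}" "u \<in> V" "v \<in> V"
      using xy(1) less.prems(2) unfolding edges_on_def by blast
    have xV: "x \<in> V" and yV: "y \<in> V" using uv by (auto simp: doubleton_eq_iff)
    define F' where "F' = F - {{x, y}}"
    define V' where "V' = V - {x}"
    have eo': "edges_on V' F'"
      unfolding edges_on_def F'_def V'_def
    proof
      fix e assume e: "e \<in> F - {{x, y}}"
      then obtain u v where uv: "e = {u, v}" "u \<in> V" "v \<in> V" "u \<noteq> v"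
        using less.prems(2) unfolding edges_on_def by blast
      have "x \<notin> e" using e xy(3) by auto
      then show "\<exists>u v. e = {u, v} \<and> u \<in> V - {x} \<and> v \<in> V - {x} \<and> u \<noteq> v" using uv by auto
    qed
    have ac': "\<nexists>xs. is_cycle F' xs" using less.prems(3) is_cycle_mono unfolding F'_def
      by blast
    have lt: "card V' < card V" unfolding V'_def using card_Diff1_less[OF less.prems(1) xV] .
    have IH: "card F' \<le> card V' - 1"
      using less.hyps[OF lt _ eo' ac'] less.prems(1) V'_def by simp
    have finF: "finite F"
    proof -
      have "F \<subseteq> Pow V"
      proof
        fix e assume "e \<in> F"
        then obtain u v where "e = {u, v}" "u \<in> V" "v \<in> V"
          using less.prems(2) unfolding edges_on_def by blast
        then show "e \<in> Pow V" by simp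
      qed
      then show ?thesis by (rule finite_subset) (simp add: less.prems(1))
    qed
    have "card F > 0" using xy(1) finF card_gt_0_iff by blast
    then have "card F = card F' + 1" unfolding F'_def using xy(1) finF
      by (simp add: card_Diff_singleton)
    moreover have "card V' = card V - 1" unfolding V'_def using xV less.prems(1) by simp
    moreover have "card V \<ge> 2"
    proof -
      have "card {x, y} \<le> card V" using xV yV less.prems(1) by (intro card_mono) auto
      then show ?thesis using xy(2) by simp
    qed
    ultimately show ?thesis using IH by linarith
  qed
qed

lemma cycle_edges_card:
  assumes "is_cycle E xs"
  shows "card (cycle_edges xs) \<ge> 3"
proof -
  let ?n = "length xs"
  have n: "?n \<ge> 3" and d: "distinct xs" using assms unfolding is_cycle_def by auto
  let ?a = "{xs ! 0, xs ! 1}" let ?b = "{xs ! 1, xs ! 2}" let ?c = "{xs ! 2, xs ! (3 mod ?n)}"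
  have a: "?a \<in> cycle_edges xs" unfolding cycle_edges_def using n
    by (intro CollectI exI[of _ 0]) auto
  have b: "?b \<in> cycle_edges xs" unfolding cycle_edges_def using n
    by (intro CollectI exI[of _ 1]) (auto simp: numeral_2_eq_2)
  have c: "?c \<in> cycle_edges xs" unfolding cycle_edges_def using n
    by (intro CollectI exI[of _ 2]) (auto simp: numeral_2_eq_2 numeral_3_eq_3)
  have "3 mod ?n \<noteq> 1" using n by (cases "?n = 3") auto
  moreover have "3 mod ?n < ?n" using n by (intro mod_less_divisor) linarith
  ultimately have x3: "xs ! (3 mod ?n) \<noteq> xs ! 1" using d n by (simp add: nth_eq_iff_index_eq)
  have l0: "0 < ?n" and l1: "1 < ?n" and l2: "2 < ?n" using n by linarith+
  have d01: "xs ! 0 \<noteq> xs ! 1" "xs ! 0 \<noteq> xs ! 2" "xs ! 1 \<noteq> xs ! 2"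
    using nth_eq_iff_index_eq[OF d l0 l1] nth_eq_iff_index_eq[OF d l0 l2]
      nth_eq_iff_index_eq[OF d l1 l2] by simp_all
  have ab: "?a \<noteq> ?b" using d01 by (auto simp: doubleton_eq_iff)
  have ac: "?a \<noteq> ?c" using d01 by (auto simp: doubleton_eq_iff)
  have bc: "?b \<noteq> ?c" using d01 x3 by (auto simp: doubleton_eq_iff)
  have fin: "finite (cycle_edges xs)" unfolding cycle_edges_def by simp
  have "card {?a, ?b, ?c} \<le> card (cycle_edges xs)" using a b c fin by (intro card_mono) auto
  moreover have "card {?a, ?b, ?c} = 3" using ab ac bc by simp
  ultimately show ?thesis by simp
qed

theorem corollary4p3:
  fixes V :: "'a set" and E :: "'a set set" and w :: "'a set \<Rightarrow> real"
  assumes "simple_graph V E"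
    and "connected_graph V E"
    and "\<forall>e\<in>E. w e > 0"
  defines "F \<equiv> {e \<in> E. Cw E w e < 2 * w e}"
  shows "(\<nexists>xs. is_cycle F xs) \<and> card F \<le> card V - 1"
proof -
  have finV: "finite V" and eoE: "edges_on V E"
    using assms(1) unfolding simple_graph_def edges_on_def by auto
  have FE: "F \<subseteq> E" unfolding F_def by auto
  have cycV: "set xs \<subseteq> V" if "is_cycle E xs" for xs
  proof
    fix v assume "v \<in> set xs"
    then obtain i where i: "i < length xs" "xs ! i = v" by (auto simp: in_set_conv_nth)
    have "{xs ! i, xs ! ((i + 1) mod length xs)} \<in> cycle_edges xs"
      unfolding cycle_edges_def using i by blast
    then have "{xs ! i, xs ! ((i + 1) mod length xs)} \<in> E"
      using that unfolding is_cycle_def by blast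
    then obtain a b where "{xs ! i, xs ! ((i + 1) mod length xs)} = {a, b}" "a \<in> V" "b \<in> V"
      using eoE unfolding edges_on_def by blast
    then show "v \<in> V" using i by (auto simp: doubleton_eq_iff)
  qed
  have acyc: "\<nexists>xs. is_cycle F xs"
  proof
    assume "\<exists>xs. is_cycle F xs"
    then obtain xs where cF: "is_cycle F xs" by blast
    have cE: "is_cycle E xs" using is_cycle_mono[OF cF FE] .
    let ?C = "cycle_edges xs"
    let ?s = "sum w ?C"
    have finC: "finite ?C" unfolding cycle_edges_def by simp
    have CF: "?C \<subseteq> F" using cF unfolding is_cycle_def by simp
    have card3: "card ?C \<ge> 3" by (rule cycle_edges_card[OF cF])
    have lt: "?s < 2 * w e" if eC: "e \<in> ?C" for e
    proof -
      let ?S = "{sum w (cycle_edges ys) | ys. is_cycle E ys \<and> e \<in> cycle_edges ys}"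
      have "?S \<subseteq> (\<lambda>ys. sum w (cycle_edges ys)) ` {ys. set ys \<subseteq> V \<and> length ys \<le> card V}"
      proof
        fix t assume "t \<in> ?S"
        then obtain ys where ys: "t = sum w (cycle_edges ys)" "is_cycle E ys" by blast
        have "set ys \<subseteq> V" using cycV ys(2) .
        moreover have "length ys \<le> card V" using ys(2) calculation finV
          unfolding is_cycle_def using card_mono[OF finV calculation] distinct_card[of ys] by simp
        ultimately show "t \<in> (\<lambda>ys. sum w (cycle_edges ys)) ` {ys. set ys \<subseteq> V \<and> length ys \<le> card V}"
          using ys by blast
      qed
      then have finS: "finite ?S"
        by (rule finite_subset) (intro finite_imageI finite_lists_length_le[OF finV])
      have sS: "?s \<in> ?S" using cE eC by blast
      have "Cw E w e = Max ?S" unfolding Cw_def using cE eC by auto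
      then have "?s \<le> Cw E w e" using finS sS by simp
      moreover have "Cw E w e < 2 * w e" using CF eC unfolding F_def by auto
      ultimately show ?thesis by simp
    qed
    have "C_pos": "?s > 0"
    proof -
      have "?C \<noteq> {}" using card3 by auto
      then show ?thesis using finC CF FE assms(3) by (intro sum_pos) auto
    qed
    have "(\<Sum>e\<in>?C. ?s) < (\<Sum>e\<in>?C. 2 * w e)"
      using finC card3 lt by (intro sum_strict_mono) auto
    then have "real (card ?C) * ?s < 2 * ?s" by (simp add: sum_distrib_left)
    moreover have "3 * ?s \<le> real (card ?C) * ?s" using card3 C_pos
      by (intro mult_right_mono) auto
    ultimately show False using C_pos by linarith
  qed
  have eoF: "edges_on V F" using eoE FE unfolding edges_on_def by blast
  show ?thesis using acyc forest_card[OF finV eoF acyc] by simp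
qed

end
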